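(* Let $\mathfrak F$ and $\mathfrak G$ be semiclosed generalized flags in $V$ and $V_*$, respectively. The following are equivalent: (1) $\mathfrak F,\mathfrak G$ form a taut couple; (2) for every $F\in\mathfrak F$ such that $F^\perp$ is a nonzero proper subspace of $V_*$, $F^\perp$ is both a union and an intersection of members of $\mathfrak G$; and for every $G\in\mathfrak G$ such that $G^\perp$ is a nonzero proper subspace of $V$, $G^\perp$ is both a union and an intersection of members of $\mathfrak F$.
   Context: $V,V_*$: countable-dimensional complex spaces with a nondegenerate pairing $\langle\cdot,\cdot\rangle$; $\mathfrak{gl}(V,V_* )=V\otimes V_*$ acts on $V$ by $(v\otimes w)u=\langle u,w\rangle v$ and on $V_*$ by $(v\otimes w)y=-\langle v,y\rangle w$. $F^\perp$ is the orthogonal complement under the pairing; $F$ is closed if $F=F^{\perp\perp}$, $\overline F:=F^{\perp\perp}$. A generalized flag in $V$ (similarly in $V_*$) is a chain $\mathfrak F$ of subspaces such that every member belongs to an immediate predecessor–successor pair $F'\subsetneq F''$ of $\mathfrak F$ (no member strictly between), and every nonzero vector $v$ lies in $F''\setminus F'$ for some pair. It is semiclosed if for each pair $F'\subset F''$ one has $\overline{F'}\in\{F',F''\}$. $\mathrm{St}_{\mathfrak F}$ is the stabilizer of $\mathfrak F$ in $\mathfrak{gl}(V,V_* )$. Semiclosed generalized flags $\mathfrak F$ in $V$ and $\mathfrak G$ in $V_*$ form a taut couple if the chain $\mathfrak F^\perp=\{F^\perp:F\in\mathfrak F\}$ is stable under $\mathrm{St}_{\mathfrak G}$ and the chain $\mathfrak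 G^\perp$ is stable under $\mathrm{St}_{\mathfrak F}$. *)

theory Defs
  imports Complex_Main "HOL-Library.Countable_Set"
begin

text \<open>Spaces V and V_* are the types 'v and 'w with complex scalar multiplications
  sV, sW.  The pairing is p :: 'v => 'w => complex.\<close>

definition orthW :: "('v \<Rightarrow> 'w \<Rightarrow> complex) \<Rightarrow> 'v set \<Rightarrow> 'w set" where
  "orthW p F = {y. \<forall>v\<in>F. p v y = 0}"

definition orthV :: "('v \<Rightarrow> 'w \<Rightarrow> complex) \<Rightarrow> 'w set \<Rightarrow> 'v set" where
  "orthV p G = {v. \<forall>y\<in>G. p v y = 0}"

definition nondeg_pairing ::
  "(complex \<Rightarrow> 'v::ab_group_add \<Rightarrow> 'v) \<Rightarrow> (complex \<Rightarrow> 'w::ab_group_add \<Rightarrow> 'w)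
   \<Rightarrow> ('v \<Rightarrow> 'w \<Rightarrow> complex) \<Rightarrow> bool" where
  "nondeg_pairing sV sW p \<longleftrightarrow>
     vector_space sV \<and> vector_space sW \<and>
     (\<forall>y. Vector_Spaces.linear sV ((*)) (\<lambda>u. p u y)) \<and>
     (\<forall>u. Vector_Spaces.linear sW ((*)) (p u)) \<and>
     (\<forall>u. (\<forall>y. p u y = 0) \<longrightarrow> u = 0) \<and>
     (\<forall>y. (\<forall>u. p u y = 0) \<longrightarrow> y = 0)"

definition countable_dim :: "(complex \<Rightarrow> 'v::ab_group_add \<Rightarrow> 'v) \<Rightarrow> bool" where
  "countable_dim s \<longleftrightarrow> (\<exists>B. countable B \<and> \<not> module.dependent s B \<and> module.span s B = UNIV)"

definition imm_pair :: "'a set set \<Rightarrow> 'a set \<Rightarrow> 'a set \<Rightarrow> bool" where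
  "imm_pair \<FF> F1 F2 \<longleftrightarrow> F1 \<in> \<FF> \<and> F2 \<in> \<FF> \<and> F1 \<subset> F2 \<and>
     \<not> (\<exists>H\<in>\<FF>. F1 \<subset> H \<and> H \<subset> F2)"

definition gen_flag :: "(complex \<Rightarrow> 'a::ab_group_add \<Rightarrow> 'a) \<Rightarrow> 'a set set \<Rightarrow> bool" where
  "gen_flag s \<FF> \<longleftrightarrow>
     (\<forall>F\<in>\<FF>. module.subspace s F) \<and>
     (\<forall>F\<in>\<FF>. \<forall>H\<in>\<FF>. F \<subseteq> H \<or> H \<subseteq> F) \<and>
     (\<forall>F\<in>\<FF>. \<exists>F1 F2. imm_pair \<FF> F1 F2 \<and> (F = F1 \<or> F = F2)) \<and>
     (\<forall>v. v \<noteq> 0 \<longrightarrow> (\<exists>F1 F2. imm_pair \<FF> F1 F2 \<and> v \<in> F2 \<and> v \<notin> F1))"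

definition semiclosed_V ::
  "(complex \<Rightarrow> 'v::ab_group_add \<Rightarrow> 'v) \<Rightarrow> ('v \<Rightarrow> 'w \<Rightarrow> complex) \<Rightarrow> 'v set set \<Rightarrow> bool" where
  "semiclosed_V sV p \<FF> \<longleftrightarrow> gen_flag sV \<FF> \<and>
     (\<forall>F1 F2. imm_pair \<FF> F1 F2 \<longrightarrow> orthV p (orthW p F1) \<in> {F1, F2})"

definition semiclosed_W ::
  "(complex \<Rightarrow> 'w::ab_group_add \<Rightarrow> 'w) \<Rightarrow> ('v \<Rightarrow> 'w \<Rightarrow> complex) \<Rightarrow> 'w set set \<Rightarrow> bool" where
  "semiclosed_W sW p \<GG> \<longleftrightarrow> gen_flag sW \<GG> \<and>
     (\<forall>G1 G2. imm_pair \<GG> G1 G2 \<longrightarrow> orthW p (orthV p G1) \<in> {G1, G2})"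

text \<open>Elements of gl(V,V_*) = V \<otimes> V_* are represented as finite sums of
  rank-one tensors v \<otimes> w, given by lists of pairs (v, w).\<close>

definition actV :: "(complex \<Rightarrow> 'v::ab_group_add \<Rightarrow> 'v) \<Rightarrow> ('v \<Rightarrow> 'w \<Rightarrow> complex)
    \<Rightarrow> ('v \<times> 'w) list \<Rightarrow> 'v \<Rightarrow> 'v" where
  "actV sV p X u = (\<Sum>(v, w)\<leftarrow>X. sV (p u w) v)"

definition actW :: "(complex \<Rightarrow> 'w::ab_group_add \<Rightarrow> 'w) \<Rightarrow> ('v \<Rightarrow> 'w \<Rightarrow> complex)
    \<Rightarrow> ('v \<times> 'w) list \<Rightarrow> 'w \<Rightarrow> 'w" where
  "actW sW p X y = (\<Sum>(v, w)\<leftarrow>X. - sW (p v y) w)"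

definition StV :: "(complex \<Rightarrow> 'v::ab_group_add \<Rightarrow> 'v) \<Rightarrow> ('v \<Rightarrow> 'w \<Rightarrow> complex)
    \<Rightarrow> 'v set set \<Rightarrow> ('v \<times> 'w) list set" where
  "StV sV p \<FF> = {X. \<forall>F\<in>\<FF>. \<forall>u\<in>F. actV sV p X u \<in> F}"

definition StW :: "(complex \<Rightarrow> 'w::ab_group_add \<Rightarrow> 'w) \<Rightarrow> ('v \<Rightarrow> 'w \<Rightarrow> complex)
    \<Rightarrow> 'w set set \<Rightarrow> ('v \<times> 'w) list set" where
  "StW sW p \<GG> = {X. \<forall>G\<in>\<GG>. \<forall>y\<in>G. actW sW p X y \<in> G}"

definition taut_couple ::
  "(complex \<Rightarrow> 'v::ab_group_add \<Rightarrow> 'v) \<Rightarrow> (complex \<Rightarrow> 'w::ab_group_add \<Rightarrow> 'w)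
   \<Rightarrow> ('v \<Rightarrow> 'w \<Rightarrow> complex) \<Rightarrow> 'v set set \<Rightarrow> 'w set set \<Rightarrow> bool" where
  "taut_couple sV sW p \<FF> \<GG> \<longleftrightarrow>
     semiclosed_V sV p \<FF> \<and> semiclosed_W sW p \<GG> \<and>
     (\<forall>X\<in>StW sW p \<GG>. \<forall>F\<in>\<FF>. \<forall>y\<in>orthW p F. actW sW p X y \<in> orthW p F) \<and>
     (\<forall>X\<in>StV sV p \<FF>. \<forall>G\<in>\<GG>. \<forall>u\<in>orthV p G. actV sV p X u \<in> orthV p G)"

end

theory Submission imports Defs begin

lemma flag_chain: "gen_flag s \<GG> \<Longrightarrow> F \<in> \<GG> \<Longrightarrow> H \<in> \<GG> \<Longrightarrow> F \<subseteq> H \<or> H \<subseteq> F"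
  unfolding gen_flag_def by blast

lemma dich:
  assumes "gen_flag s \<GG>" "imm_pair \<GG> G1 G2" "G \<in> \<GG>"
  shows "G \<subseteq> G1 \<or> G2 \<subseteq> G"
proof -
  have i: "G1 \<in> \<GG>" "G2 \<in> \<GG>" "G1 \<subset> G2" "\<not> (\<exists>H\<in>\<GG>. G1 \<subset> H \<and> H \<subset> G2)"
    using assms(2) unfolding imm_pair_def by auto
  have "G \<subseteq> G1 \<or> G1 \<subseteq> G" using flag_chain[OF assms(1) assms(3) i(1)] .
  moreover have "G \<subseteq> G2 \<or> G2 \<subseteq> G" using flag_chain[OF assms(1) assms(3) i(2)] .
  ultimately show ?thesis using i(3,4) assms(3) by blast
qed
lemma key:
  fixes s :: "complex \<Rightarrow> 'a::ab_group_add \<Rightarrow> 'a" and q :: "'b \<Rightarrow> 'a \<Rightarrow> complex"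
  assumes vs: "vector_space s"
  and hom: "\<And>v c x. q v (s c x) = c * q v x"
  and flag: "gen_flag s \<GG>"
  and semi: "\<And>G1 G2. imm_pair \<GG> G1 G2 \<Longrightarrow> {y. \<forall>v\<in>{v. \<forall>y\<in>G1. q v y = 0}. q v y = 0} \<in> {G1, G2}"
  and Ldef: "L = {y. \<forall>v\<in>F. q v y = 0}"
  and stab: "\<And>v z y. (\<forall>G\<in>\<GG>. \<forall>y\<in>G. s (q v y) z \<in> G) \<Longrightarrow> y \<in> L \<Longrightarrow> s (q v y) z \<in> L"
  and L0: "L \<noteq> {0}" and LU: "L \<noteq> UNIV"
  shows "(\<exists>S\<subseteq>\<GG>. L = \<Union>S) \<and> (\<exists>T\<subseteq>\<GG>. L = \<Inter>T)"
proof -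
  interpret V: vector_space s by (rule vs)
  define cl where "cl G = {y. \<forall>v\<in>{v. \<forall>y\<in>G. q v y = 0}. q v y = 0}" for G
  have semi': "cl G1 \<in> {G1, G2}" if "imm_pair \<GG> G1 G2" for G1 G2
    using semi[OF that] unfolding cl_def .
  have sub: "V.subspace G" if "G \<in> \<GG>" for G
  proof -
    have "\<forall>F\<in>\<GG>. V.subspace F" using flag unfolding gen_flag_def by (rule conjunct1)
    then show ?thesis using that by blast
  qed
  have q0: "q v 0 = 0" for v
    using hom[of v 0 0] by simp
  have Lscale: "s c x \<in> L" if "x \<in> L" for c x
    using that hom unfolding Ldef by auto
  have L0in: "0 \<in> L" unfolding Ldef using q0 by simp
  have mono: "cl G \<subseteq> L" if "G \<subseteq> L" for G
    using that unfolding cl_def Ldef by blast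
  have clsup: "G \<subseteq> cl G" for G unfolding cl_def by blast
  have pair: "\<exists>H1 H2. imm_pair \<GG> H1 H2 \<and> z \<in> H2 \<and> z \<notin> H1" if "z \<noteq> 0" for z
  proof -
    have "\<forall>v. v \<noteq> 0 \<longrightarrow> (\<exists>F1 F2. imm_pair \<GG> F1 F2 \<and> v \<in> F2 \<and> v \<notin> F1)"
      using flag unfolding gen_flag_def by (elim conjE)
    then show ?thesis using that by blast
  qed
  have move: "z \<in> L" if ip: "imm_pair \<GG> H1 H2" and zH: "z \<in> H2" and vH: "\<forall>y\<in>H1. q v y = 0"
     and yL: "y \<in> L" and qy: "q v y \<noteq> 0" for H1 H2 z v y
  proof -
    have "\<forall>G\<in>\<GG>. \<forall>y\<in>G. s (q v y) z \<in> G"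
    proof (intro ballI)
      fix G y' assume G: "G \<in> \<GG>" and y': "y' \<in> G"
      from dich[OF flag ip G] show "s (q v y') z \<in> G"
      proof
        assume "G \<subseteq> H1"
        then have "q v y' = 0" using vH y' by blast
        then show ?thesis using V.subspace_0[OF sub[OF G]] by simp
      next
        assume "H2 \<subseteq> G"
        then show ?thesis using zH V.subspace_scale[OF sub[OF G]] by blast
      qed
    qed
    from stab[OF this yL] have "s (q v y) z \<in> L" .
    then have "s (1 / q v y) (s (q v y) z) \<in> L" by (rule Lscale)
    then show ?thesis using qy by simp
  qed
  have sep: "\<exists>v. (\<forall>y\<in>H. q v y = 0) \<and> q v y \<noteq> 0" if "y \<notin> cl H" for H y
    using that unfolding cl_def by blast
  have A: "G2 \<subseteq> L" if ip: "imm_pair \<GG> G1 G2" and yL: "y \<in> L" and y2: "y \<in> G2" and y1: "y \<notin> G1" for G1 G2 y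
  proof -
    have G1L: "G1 \<subseteq> L"
    proof
      fix z assume zG1: "z \<in> G1"
      show "z \<in> L"
      proof (cases "z = 0")
        case True then show ?thesis using L0in by simp
      next
        case False
        then obtain H1 H2 where ipH: "imm_pair \<GG> H1 H2" and z2: "z \<in> H2" and z1: "z \<notin> H1"
          using pair by blast
        have "G1 \<in> \<GG>" using ip unfolding imm_pair_def by blast
        from dich[OF flag ipH this] zG1 z1 have "H2 \<subseteq> G1" by blast
        moreover have "H1 \<subseteq> H2" using ipH unfolding imm_pair_def by blast
        ultimately have "cl H1 \<subseteq> G1" using semi'[OF ipH] by auto
        then have "y \<notin> cl H1" using y1 by blast
        then obtain v where "\<forall>y\<in>H1. q v y = 0" "q v y \<noteq> 0" using sep by blast
        then show ?thesis using move[OF ipH z2 _ yL] by blast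
      qed
    qed
    from semi'[OF ip] have "cl G1 = G1 \<or> cl G1 = G2" by simp
    then show ?thesis
    proof
      assume c: "cl G1 = G1"
      show ?thesis
      proof
        fix z assume z2: "z \<in> G2"
        show "z \<in> L"
        proof (cases "z \<in> G1")
          case True then show ?thesis using G1L by blast
        next
          case False
          have "y \<notin> cl G1" using c y1 by simp
          then obtain v where "\<forall>y\<in>G1. q v y = 0" "q v y \<noteq> 0" using sep by blast
          then show ?thesis using move[OF ip z2 _ yL] by blast
        qed
      qed
    next
      assume "cl G1 = G2" then show ?thesis using mono[OF G1L] by simp
    qed
  qed
  have ipmem: "G1 \<in> \<GG> \<and> G2 \<in> \<GG> \<and> G1 \<subset> G2" if "imm_pair \<GG> G1 G2" for G1 G2
    using that unfolding imm_pair_def by blast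
  obtain y0 where y0L: "y0 \<in> L" and y0: "y0 \<noteq> 0" using L0 L0in by blast
  have U: "L = \<Union>{G \<in> \<GG>. G \<subseteq> L}"
  proof
    show "L \<subseteq> \<Union>{G \<in> \<GG>. G \<subseteq> L}"
    proof
      fix y assume yL: "y \<in> L"
      show "y \<in> \<Union>{G \<in> \<GG>. G \<subseteq> L}"
      proof (cases "y = 0")
        case True
        obtain H1 H2 where ipH: "imm_pair \<GG> H1 H2" and a: "y0 \<in> H2" "y0 \<notin> H1" using pair[OF y0] by blast
        have "H2 \<subseteq> L" using A[OF ipH y0L a] .
        moreover have "0 \<in> H2" using V.subspace_0[OF sub] ipmem[OF ipH] by blast
        ultimately show ?thesis using True ipmem[OF ipH] by blast
      next
        case False
        obtain H1 H2 where ipH: "imm_pair \<GG> H1 H2" and a: "y \<in> H2" "y \<notin> H1" using pair[OF False] by blast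
        have "H2 \<subseteq> L" using A[OF ipH yL a] .
        then show ?thesis using a ipmem[OF ipH] by blast
      qed
    qed
  qed blast
  have I: "L = \<Inter>{G \<in> \<GG>. L \<subseteq> G}"
  proof
    show "\<Inter>{G \<in> \<GG>. L \<subseteq> G} \<subseteq> L"
    proof
      fix y assume yI: "y \<in> \<Inter>{G \<in> \<GG>. L \<subseteq> G}"
      show "y \<in> L"
      proof (rule ccontr)
        assume yL: "y \<notin> L"
        then have "y \<noteq> 0" using L0in by blast
        then obtain G1 G2 where ip: "imm_pair \<GG> G1 G2" and a: "y \<in> G2" "y \<notin> G1" using pair by blast
        have "L \<subseteq> G1"
        proof
          fix x assume xL: "x \<in> L"
          show "x \<in> G1"
          proof (rule ccontr)
            assume x1: "x \<notin> G1"
            then have "x \<noteq> 0" using V.subspace_0[OF sub] ipmem[OF ip] by blast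
            then obtain H1 H2 where ipH: "imm_pair \<GG> H1 H2" and b: "x \<in> H2" "x \<notin> H1" using pair by blast
            have H2L: "H2 \<subseteq> L" using A[OF ipH xL b] .
            have "G2 \<subseteq> H2"
            proof -
              have "G1 \<subseteq> H2 \<or> H2 \<subseteq> G1" using flag_chain[OF flag] ipmem[OF ip] ipmem[OF ipH] by blast
              then have "G1 \<subset> H2" using b x1 by blast
              moreover have "G2 \<subseteq> H2 \<or> H2 \<subseteq> G2" using flag_chain[OF flag] ipmem[OF ip] ipmem[OF ipH] by blast
              moreover have "\<not> (\<exists>H\<in>\<GG>. G1 \<subset> H \<and> H \<subset> G2)" using ip unfolding imm_pair_def by blast
              ultimately show ?thesis using ipmem[OF ipH] by blast
            qed
            then show False using H2L a yL by blast
          qed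
        qed
        then have "y \<in> G1" using yI ipmem[OF ip] by blast
        then show False using a by blast
      qed
    qed
  qed blast
  have "{G \<in> \<GG>. G \<subseteq> L} \<subseteq> \<GG>" "{G \<in> \<GG>. L \<subseteq> G} \<subseteq> \<GG>" by auto
  then show ?thesis using U I by blast
qed

lemma np_facts:
  assumes "nondeg_pairing sV sW p"
  shows "vector_space sV" "vector_space sW" "\<And>v c x. p v (sW c x) = c * p v x"
    "\<And>w c u. p (sV c u) w = c * p u w"
proof -
  show "vector_space sV" "vector_space sW" using assms unfolding nondeg_pairing_def by auto
  fix v c x
  have "Vector_Spaces.linear sW (*) (p v)" using assms unfolding nondeg_pairing_def by blast
  then show "p v (sW c x) = c * p v x" unfolding Vector_Spaces.linear_iff by auto
next
  fix w c u
  have "Vector_Spaces.linear sV (*) (\<lambda>u. p u w)" using assms unfolding nondeg_pairing_def by blast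
  then show "p (sV c u) w = c * p u w" unfolding Vector_Spaces.linear_iff by auto
qed

lemma actW_single: assumes "vector_space sW" shows "actW sW p [(v, - z)] y = sW (p v y) z"
proof -
  interpret W: vector_space sW by fact
  show ?thesis unfolding actW_def by (simp add: W.scale_minus_right)
qed

lemma actV_single: "actV sV p [(z, w)] u = sV (p u w) z"
  unfolding actV_def by simp

lemma actW_0:
  assumes "nondeg_pairing sV sW p" shows "actW sW p X 0 = 0"
proof -
  note f = np_facts[OF assms]
  interpret W: vector_space sW by (rule f(2))
  have p0: "p v 0 = 0" for v by (metis f(3) W.scale_zero_left mult_zero_left)
  show ?thesis unfolding actW_def
    by (induct X) (auto simp: p0 W.scale_zero_left)
qed

lemma actV_0:
  assumes "nondeg_pairing sV sW p" shows "actV sV p X 0 = 0"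
proof -
  note f = np_facts[OF assms]
  interpret V: vector_space sV by (rule f(1))
  have p0: "p 0 w = 0" for w by (metis f(4) V.scale_zero_left mult_zero_left)
  show ?thesis unfolding actV_def
    by (induct X) (auto simp: p0 V.scale_zero_left)
qed

theorem proposition3p3:
  fixes sV :: "complex \<Rightarrow> 'v::ab_group_add \<Rightarrow> 'v"
    and sW :: "complex \<Rightarrow> 'w::ab_group_add \<Rightarrow> 'w"
    and p :: "'v \<Rightarrow> 'w \<Rightarrow> complex"
    and \<FF> :: "'v set set" and \<GG> :: "'w set set"
  assumes "nondeg_pairing sV sW p"
    and "countable_dim sV" and "countable_dim sW"
    and "semiclosed_V sV p \<FF>" and "semiclosed_W sW p \<GG>"
  shows "taut_couple sV sW p \<FF> \<GG> \<longleftrightarrow>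
    ((\<forall>F\<in>\<FF>. orthW p F \<noteq> {0} \<and> orthW p F \<noteq> UNIV \<longrightarrow>
        (\<exists>S\<subseteq>\<GG>. orthW p F = \<Union>S) \<and> (\<exists>T\<subseteq>\<GG>. orthW p F = \<Inter>T)) \<and>
     (\<forall>G\<in>\<GG>. orthV p G \<noteq> {0} \<and> orthV p G \<noteq> UNIV \<longrightarrow>
        (\<exists>S\<subseteq>\<FF>. orthV p G = \<Union>S) \<and> (\<exists>T\<subseteq>\<FF>. orthV p G = \<Inter>T)))"
proof
  note f = np_facts[OF assms(1)]
  have flagV: "gen_flag sV \<FF>" and semV: "\<And>F1 F2. imm_pair \<FF> F1 F2 \<Longrightarrow> orthV p (orthW p F1) \<in> {F1, F2}"
    using assms(4) unfolding semiclosed_V_def by auto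
  have flagW: "gen_flag sW \<GG>" and semW: "\<And>G1 G2. imm_pair \<GG> G1 G2 \<Longrightarrow> orthW p (orthV p G1) \<in> {G1, G2}"
    using assms(5) unfolding semiclosed_W_def by auto
  {
    assume T: "taut_couple sV sW p \<FF> \<GG>"
    have TW: "\<And>X F y. X \<in> StW sW p \<GG> \<Longrightarrow> F \<in> \<FF> \<Longrightarrow> y \<in> orthW p F \<Longrightarrow> actW sW p X y \<in> orthW p F"
    proof -
      fix X F y assume a: "X \<in> StW sW p \<GG>" "F \<in> \<FF>" "y \<in> orthW p F"
      have "\<forall>X\<in>StW sW p \<GG>. \<forall>F\<in>\<FF>. \<forall>y\<in>orthW p F. actW sW p X y \<in> orthW p F"
        using T unfolding taut_couple_def by (elim conjE)
      then show "actW sW p X y \<in> orthW p F" using a by blast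
    qed
    have TV: "\<And>X G u. X \<in> StV sV p \<FF> \<Longrightarrow> G \<in> \<GG> \<Longrightarrow> u \<in> orthV p G \<Longrightarrow> actV sV p X u \<in> orthV p G"
    proof -
      fix X G u assume a: "X \<in> StV sV p \<FF>" "G \<in> \<GG>" "u \<in> orthV p G"
      have "\<forall>X\<in>StV sV p \<FF>. \<forall>G\<in>\<GG>. \<forall>u\<in>orthV p G. actV sV p X u \<in> orthV p G"
        using T unfolding taut_couple_def by (elim conjE)
      then show "actV sV p X u \<in> orthV p G" using a by blast
    qed
    show "(\<forall>F\<in>\<FF>. orthW p F \<noteq> {0} \<and> orthW p F \<noteq> UNIV \<longrightarrow>
        (\<exists>S\<subseteq>\<GG>. orthW p F = \<Union>S) \<and> (\<exists>T\<subseteq>\<GG>. orthW p F = \<Inter>T)) \<and>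
     (\<forall>G\<in>\<GG>. orthV p G \<noteq> {0} \<and> orthV p G \<noteq> UNIV \<longrightarrow>
        (\<exists>S\<subseteq>\<FF>. orthV p G = \<Union>S) \<and> (\<exists>T\<subseteq>\<FF>. orthV p G = \<Inter>T))"
    proof (rule conjI; intro ballI impI; elim conjE)
      fix F assume F: "F \<in> \<FF>" and n0: "orthW p F \<noteq> {0}" and nU: "orthW p F \<noteq> UNIV"
      show "(\<exists>S\<subseteq>\<GG>. orthW p F = \<Union>S) \<and> (\<exists>T\<subseteq>\<GG>. orthW p F = \<Inter>T)"
      proof (rule key[where s = sW and q = p and F = F])
        show "vector_space sW" by (rule f(2))
        show "\<And>v c x. p v (sW c x) = c * p v x" by (rule f(3))
        show "gen_flag sW \<GG>" by (rule flagW)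
        show "\<And>G1 G2. imm_pair \<GG> G1 G2 \<Longrightarrow> {y. \<forall>v\<in>{v. \<forall>y\<in>G1. p v y = 0}. p v y = 0} \<in> {G1, G2}"
          using semW unfolding orthW_def orthV_def .
        show "orthW p F = {y. \<forall>v\<in>F. p v y = 0}" unfolding orthW_def ..
        show "orthW p F \<noteq> {0}" "orthW p F \<noteq> UNIV" by fact+
        fix v z y assume h: "\<forall>G\<in>\<GG>. \<forall>y\<in>G. sW (p v y) z \<in> G" and y: "y \<in> orthW p F"
        have "[(v, - z)] \<in> StW sW p \<GG>" using h unfolding StW_def by (simp add: actW_single[OF f(2)])
        from TW[OF this F y] show "sW (p v y) z \<in> orthW p F" unfolding actW_single[OF f(2)] .
      qed
    next
      fix G assume G: "G \<in> \<GG>" and n0: "orthV p G \<noteq> {0}" and nU: "orthV p G \<noteq> UNIV"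
      show "(\<exists>S\<subseteq>\<FF>. orthV p G = \<Union>S) \<and> (\<exists>T\<subseteq>\<FF>. orthV p G = \<Inter>T)"
      proof (rule key[where s = sV and q = "\<lambda>w u. p u w" and F = G])
        show "vector_space sV" by (rule f(1))
        show "\<And>v c x. p (sV c x) v = c * p x v" by (rule f(4))
        show "gen_flag sV \<FF>" by (rule flagV)
        show "\<And>G1 G2. imm_pair \<FF> G1 G2 \<Longrightarrow> {y. \<forall>v\<in>{v. \<forall>y\<in>G1. p y v = 0}. p y v = 0} \<in> {G1, G2}"
          using semV unfolding orthW_def orthV_def .
        show "orthV p G = {y. \<forall>v\<in>G. p y v = 0}" unfolding orthV_def ..
        show "orthV p G \<noteq> {0}" "orthV p G \<noteq> UNIV" by fact+
        fix w z u assume h: "\<forall>F\<in>\<FF>. \<forall>y\<in>F. sV (p y w) z \<in> F" and u: "u \<in> orthV p G"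
        have "[(z, w)] \<in> StV sV p \<FF>" using h unfolding StV_def by (simp add: actV_single)
        from TV[OF this G u] show "sV (p u w) z \<in> orthV p G" unfolding actV_single .
      qed
    qed
  }
  assume R: "(\<forall>F\<in>\<FF>. orthW p F \<noteq> {0} \<and> orthW p F \<noteq> UNIV \<longrightarrow>
        (\<exists>S\<subseteq>\<GG>. orthW p F = \<Union>S) \<and> (\<exists>T\<subseteq>\<GG>. orthW p F = \<Inter>T)) \<and>
     (\<forall>G\<in>\<GG>. orthV p G \<noteq> {0} \<and> orthV p G \<noteq> UNIV \<longrightarrow>
        (\<exists>S\<subseteq>\<FF>. orthV p G = \<Union>S) \<and> (\<exists>T\<subseteq>\<FF>. orthV p G = \<Inter>T))"
  have W: "actW sW p X y \<in> orthW p F" if X: "X \<in> StW sW p \<GG>" and F: "F \<in> \<FF>" and y: "y \<in> orthW p F" for X F y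
  proof (cases "orthW p F = {0} \<or> orthW p F = UNIV")
    case True then show ?thesis using y actW_0[OF assms(1)] by auto
  next
    case False
    have "\<exists>S\<subseteq>\<GG>. orthW p F = \<Union>S" using conjunct1[OF R] F False by blast
    then obtain S where S: "S \<subseteq> \<GG>" "orthW p F = \<Union>S" by blast
    then obtain G where "G \<in> S" "y \<in> G" using y by blast
    then have "actW sW p X y \<in> G" using X S unfolding StW_def by blast
    then show ?thesis using S \<open>G \<in> S\<close> by blast
  qed
  have V: "actV sV p X u \<in> orthV p G" if X: "X \<in> StV sV p \<FF>" and G: "G \<in> \<GG>" and u: "u \<in> orthV p G" for X G u
  proof (cases "orthV p G = {0} \<or> orthV p G = UNIV")
    case True then show ?thesis using u actV_0[OF assms(1)] by auto
  next
    case False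
    have "\<exists>S\<subseteq>\<FF>. orthV p G = \<Union>S" using conjunct2[OF R] G False by blast
    then obtain S where S: "S \<subseteq> \<FF>" "orthV p G = \<Union>S" by blast
    then obtain F where "F \<in> S" "u \<in> F" using u by blast
    then have "actV sV p X u \<in> F" using X S unfolding StV_def by blast
    then show ?thesis using S \<open>F \<in> S\<close> by blast
  qed
  show "taut_couple sV sW p \<FF> \<GG>"
    unfolding taut_couple_def using assms(4,5) W V by (intro conjI ballI) auto
qed

end
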